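(* Consider the feasible set $F$ of the distributionally robust chance-constrained bin packing problem: all $(z,y)$ with $z\in\{0,1\}^I$, $y=(y_{ij})\in\{0,1\}^{I\times J}$ satisfying $y_{ij}\le\rho_{ij}z_i$ for all $i\in[I],j\in[J]$, $\sum_{i=1}^I y_{ij}=1$ for all $j\in[J]$, and, for each $i\in[I]$, the chance constraint $\inf_{\mathbb{P}\in\mathcal{D}}\mathbb{P}\{\sum_{j=1}^J\tilde t_{ij}y_{ij}\le T_i\}\ge1-\alpha_i$. Fix $i\in[I]$ and write $y_i=(y_{i1},\dots,y_{iJ})$. (a) Let $h:\{0,1\}^J\to\mathbb{R}$ be submodular with $h(0)=0$ such that every $(z,y)\in F$ satisfies $h(y_i)\le T_i$ (so that $\pi^{\top}y_i\le T_i$ is an extended polymatroid inequality for bin $i$ whenever $\pi\in\mathrm{EP}_h$). Then for every $\pi\in\mathrm{EP}_h$, the inequality $\pi^{\top}y_i\le T_i z_i$ is valid for $F$. (b) Let $v_i\in\{0,1\}^{J+J^2}$ be the lifted vector $v_i=(y_{i1},\dots,y_{iJ},w_{i11},\dots,w_{i1J},w_{i21},\dots,w_{iJJ})$ with $w_{ijk}=y_{ij}y_{ik}$, and let $h:\{0,1\}^{J+J^2}\to\mathbb{R}$ be submodular with $h(0)=0$ such that every $(z,y)\in F$ satisfies $h(v_i)\le T_i^2$. Then for every $\pi\in\mathrm{EP}_h$, the inequality $\pi^{\top}v_i\le T_i^2 z_i$ is valid for $F$.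
   Context: $[I]=\{1,\dots,I\}$ indexes bins with capacities $T_i\in\mathbb{R}$ and risk levels $\alpha_i\in(0,1)$; $[J]=\{1,\dots,J\}$ indexes items; $\rho_{ij}\in\{0,1\}$ indicates whether item $j$ may be assigned to bin $i$; $z_i=1$ iff bin $i$ is open; $y_{ij}=1$ iff item $j$ is assigned to bin $i$; $\tilde t_{ij}$ are random item weights whose joint distribution $\mathbb{P}$ ranges over an ambiguity set $\mathcal{D}$. Binary vectors are identified with subsets. A set function $h$ on subsets of a ground set $N$ is submodular if $h(R\cup\{j\})-h(R)\ge h(S\cup\{j\})-h(S)$ for all $R\subseteq S\subseteq N$, $j\in N\setminus S$. For such $h$, the extended polymatroid is $\mathrm{EP}_h=\{\pi\in\mathbb{R}^{N}:\ \sum_{j\in R}\pi_j\le h(R)\ \forall R\subseteq N\}$. An inequality is valid for $F$ if every point of $F$ satisfies it. *)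

theory Defs
  imports "HOL-Probability.Probability"
begin

definition submodular :: "('a set \<Rightarrow> real) \<Rightarrow> bool" where
  "submodular h \<longleftrightarrow>
     (\<forall>R S j. R \<subseteq> S \<longrightarrow> j \<notin> S \<longrightarrow> h (insert j R) - h R \<ge> h (insert j S) - h S)"

definition EP :: "('a::finite set \<Rightarrow> real) \<Rightarrow> ('a \<Rightarrow> real) set" where
  "EP h = {\<pi>. \<forall>R. (\<Sum>j\<in>R. \<pi> j) \<le> h R}"

text \<open>Bins are indexed by the finite type 'i, items by the finite type 'j.
  z and y are 0/1 real vectors. The random weights are t \<omega> i j on a sample
  space 'w; D is the ambiguity set of distributions (measures on 'w).
  The constraint inf_{P in D} P{...} \<ge> 1 - alpha_i is written out as
  "for all P in D".\<close>
definition feasible ::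
  "('i::finite \<Rightarrow> real) \<Rightarrow> ('i \<Rightarrow> real) \<Rightarrow> ('i \<Rightarrow> 'j::finite \<Rightarrow> real)
   \<Rightarrow> 'w measure set \<Rightarrow> ('w \<Rightarrow> 'i \<Rightarrow> 'j \<Rightarrow> real)
   \<Rightarrow> (('i \<Rightarrow> real) \<times> ('i \<Rightarrow> 'j \<Rightarrow> real)) set" where
  "feasible T \<alpha> \<rho> D t =
     {(z, y). (\<forall>i. z i \<in> {0, 1}) \<and> (\<forall>i j. y i j \<in> {0, 1})
        \<and> (\<forall>i j. y i j \<le> \<rho> i j * z i)
        \<and> (\<forall>j. (\<Sum>i\<in>UNIV. y i j) = 1)
        \<and> (\<forall>i. \<forall>P\<in>D.
              measure P {\<omega> \<in> space P. (\<Sum>j\<in>UNIV. t \<omega> i j * y i j) \<le> T i} \<ge> 1 - \<alpha> i)}"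

definition supp01 :: "('a \<Rightarrow> real) \<Rightarrow> 'a set" where
  "supp01 x = {j. x j = 1}"

definition lifted :: "('i \<Rightarrow> 'j \<Rightarrow> real) \<Rightarrow> 'i \<Rightarrow> ('j + 'j \<times> 'j) \<Rightarrow> real" where
  "lifted y i e = (case e of Inl j \<Rightarrow> y i j | Inr (j, k) \<Rightarrow> y i j * y i k)"

end

theory Submission
  imports Defs
begin

lemma sum01:
  fixes x :: "'a::finite \<Rightarrow> real"
  assumes "\<forall>j. x j \<in> {0,1}"
  shows "(\<Sum>j\<in>UNIV. \<pi> j * x j) = (\<Sum>j\<in>supp01 x. \<pi> j)"
proof -
  have "(\<Sum>j\<in>UNIV. \<pi> j * x j) = (\<Sum>j\<in>UNIV. if x j = 1 then \<pi> j else 0)"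
    by (rule sum.cong) (use assms in auto)
  also have "\<dots> = (\<Sum>j\<in>supp01 x. \<pi> j)"
    by (simp add: sum.If_cases supp01_def)
  finally show ?thesis .
qed

lemma lifted01:
  assumes "\<forall>j. y i j \<in> {0,1::real}" shows "\<forall>e. lifted y i e \<in> {0,1}"
proof
  fix e show "lifted y i e \<in> {0,1}"
  proof (cases e)
    case (Inl j) then show ?thesis using assms by (simp add: lifted_def)
  next
    case (Inr p) then obtain j k where "e = Inr (j,k)" by (cases p) auto
    moreover have "y i j \<in> {0,1}" "y i k \<in> {0,1}" using assms by blast+
    ultimately show ?thesis by (auto simp add: lifted_def)
  qed
qed

lemma feasD:
  assumes "(z, y) \<in> feasible T \<alpha> \<rho> D t"
  shows "\<forall>j. y i j \<in> {0,1}" "z i \<in> {0,1}" "z i = 0 \<Longrightarrow> y i j = 0"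
proof -
  have F: "\<forall>i j. y i j \<in> {0, 1}" "\<forall>i. z i \<in> {0,1}" "\<forall>i j. y i j \<le> \<rho> i j * z i"
    using assms unfolding feasible_def by blast+
  show a: "\<forall>j. y i j \<in> {0,1}" "z i \<in> {0,1}" using F by blast+
  assume "z i = 0"
  then have "y i j \<le> 0" using F(3)[rule_format, of i j] by simp
  then show "y i j = 0" using a(1) by force
qed

theorem proposition4:
  fixes T \<alpha> :: "'i::finite \<Rightarrow> real" and \<rho> :: "'i \<Rightarrow> 'j::finite \<Rightarrow> real"
    and D :: "'w measure set" and t :: "'w \<Rightarrow> 'i \<Rightarrow> 'j \<Rightarrow> real" and i :: 'i
  assumes "\<forall>b. 0 < \<alpha> b \<and> \<alpha> b < 1"
    and "\<forall>b j. \<rho> b j \<in> {0, 1}"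
    and "\<forall>P\<in>D. prob_space P"
    and "\<forall>P\<in>D. \<forall>b j. (\<lambda>\<omega>. t \<omega> b j) \<in> borel_measurable P"
  shows
    "(\<forall>h :: 'j set \<Rightarrow> real.
        submodular h \<and> h {} = 0
        \<and> (\<forall>(z, y) \<in> feasible T \<alpha> \<rho> D t. h (supp01 (y i)) \<le> T i)
        \<longrightarrow> (\<forall>\<pi> \<in> EP h. \<forall>(z, y) \<in> feasible T \<alpha> \<rho> D t.
               (\<Sum>j\<in>UNIV. \<pi> j * y i j) \<le> T i * z i))
     \<and>
     (\<forall>h :: ('j + 'j \<times> 'j) set \<Rightarrow> real.
        submodular h \<and> h {} = 0
        \<and> (\<forall>(z, y) \<in> feasible T \<alpha> \<rho> D t. h (supp01 (lifted y i)) \<le> (T i)\<^sup>2)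
        \<longrightarrow> (\<forall>\<pi> \<in> EP h. \<forall>(z, y) \<in> feasible T \<alpha> \<rho> D t.
               (\<Sum>e\<in>UNIV. \<pi> e * lifted y i e) \<le> (T i)\<^sup>2 * z i))"
proof (intro conjI allI impI ballI; clarify)
  fix h :: "'j set \<Rightarrow> real" and \<pi> z y
  assume h: "submodular h" "h {} = 0" "\<forall>(z, y) \<in> feasible T \<alpha> \<rho> D t. h (supp01 (y i)) \<le> T i"
    and p: "\<pi> \<in> EP h" and f: "(z, y) \<in> feasible T \<alpha> \<rho> D t"
  show "(\<Sum>j\<in>UNIV. \<pi> j * y i j) \<le> T i * z i"
  proof (cases "z i = 0")
    case True then show ?thesis using feasD(3)[OF f] by simp
  next
    case False
    then have z1: "z i = 1" using feasD(2)[OF f] by auto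
    have "(\<Sum>j\<in>UNIV. \<pi> j * y i j) = (\<Sum>j\<in>supp01 (y i). \<pi> j)" by (rule sum01[OF feasD(1)[OF f]])
    also have "\<dots> \<le> h (supp01 (y i))" using p by (simp add: EP_def)
    also have "\<dots> \<le> T i" using bspec[OF h(3) f] by simp
    finally show ?thesis using z1 by simp
  qed
next
  fix h :: "('j + 'j \<times> 'j) set \<Rightarrow> real" and \<pi> z y
  assume h: "submodular h" "h {} = 0" "\<forall>(z, y) \<in> feasible T \<alpha> \<rho> D t. h (supp01 (lifted y i)) \<le> (T i)\<^sup>2"
    and p: "\<pi> \<in> EP h" and f: "(z, y) \<in> feasible T \<alpha> \<rho> D t"
  show "(\<Sum>e\<in>UNIV. \<pi> e * lifted y i e) \<le> (T i)\<^sup>2 * z i"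
  proof (cases "z i = 0")
    case True
    have "\<forall>e. lifted y i e = 0"
      using feasD(3)[OF f True] by (auto simp add: lifted_def split: sum.splits prod.splits)
    then show ?thesis using True by (simp del: lifted_def)
  next
    case False
    then have z1: "z i = 1" using feasD(2)[OF f] by auto
    have "(\<Sum>e\<in>UNIV. \<pi> e * lifted y i e) = (\<Sum>e\<in>supp01 (lifted y i). \<pi> e)"
      by (rule sum01[OF lifted01[OF feasD(1)[OF f]]])
    also have "\<dots> \<le> h (supp01 (lifted y i))" using p by (simp add: EP_def)
    also have "\<dots> \<le> (T i)\<^sup>2" using bspec[OF h(3) f] by simp
    finally show ?thesis using z1 by simp
  qed
qed

end
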